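(* Consider the iteration: start from any $(\underline p^{(0)},\underline\psi^{(0)})\in\mathcal F$; at step $t$, set $\mu^{(t)}_{lk}=\beta_{llk}\sqrt{p^{(t)}_{lk}}\,D_l^{-1}\psi^{(t)}_{lk}$ (with $D_l$ evaluated at $(\underline p^{(t)},\underline\psi^{(t)})$), and then let $(\underline p^{(t+1)},\underline\psi^{(t+1)})$ be a maximizer of $f(\cdot,\cdot,\underline\mu^{(t)})$ over $\mathcal F$. Then the weighted sum MSE $\sum_{(l,k)}\alpha_{lk}\mathsf{MSE}_{lk}$ evaluated at $(\underline p^{(t)},\underline\psi^{(t)})$ is nonincreasing in $t$.
   Context: $L$ cells indexed by $l,i$, each with $K$ users indexed by $k,j$, $K\le\tau$; sums over $(i,j)$ or $(l,k)$ range over all $LK$ users. $M$ antennas per base station; noise variance $\sigma^2>0$; power budget $P_{\max}>0$; large-scale fading $\beta_{lij}>0$; weights $\alpha_{lk}>0$. $\{\varphi_1,\dots,\varphi_\tau\}\subset\mathbb C^\tau$ satisfy $\varphi_s^H\varphi_t=\tau$ if $s=t$ and $0$ otherwise. The feasible set $\mathcal F$ consists of $(\underline p,\underline\psi)$ with $0\le p_{lk}\le P_{\max}$, $\psi_{lk}\in\{\varphi_1,\dots,\varphi_\tau\}$, and $\psi_{lk}\ne\psi_{lk'}$ for $k\ne k'$. Pilot of user $(l,k)$ is $\phi_{lk}=\sqrt{p_{lk}}\psi_{lk}$. $D_l=\sigma^2I_\tau+\sum_{(i,j)}\beta_{lij}p_{ij}\psi_{ij}\psi_{ij}^H$; $\mathsf{MSE}_{lk}=M\beta_{llk}-M\beta_{llk}^2p_{lk}\psi_{lk}^HD_l^{-1}\psi_{lk}$;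 $f(\underline p,\underline\psi,\underline\mu)=\sum_{(l,k)}\alpha_{lk}\big(2\beta_{llk}\sqrt{p_{lk}}\Re\{\mu_{lk}^H\psi_{lk}\}-\mu_{lk}^HD_l\mu_{lk}\big)$ with $\mu_{lk}\in\mathbb C^\tau$. *)

theory Defs
  imports "HOL-Analysis.Analysis"
begin

definition hip :: "complex^'t \<Rightarrow> complex^'t \<Rightarrow> complex" where
  "hip x y = (\<Sum>a\<in>UNIV. cnj (x $ a) * y $ a)"

definition feasible ::
  "nat \<Rightarrow> nat \<Rightarrow> real \<Rightarrow> (nat \<Rightarrow> complex^'t)
   \<Rightarrow> (nat \<Rightarrow> nat \<Rightarrow> real) \<Rightarrow> (nat \<Rightarrow> nat \<Rightarrow> complex^'t) \<Rightarrow> bool" where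
  "feasible L K Pmax phi p psi \<longleftrightarrow>
     (\<forall>l<L. \<forall>k<K. 0 \<le> p l k \<and> p l k \<le> Pmax) \<and>
     (\<forall>l<L. \<forall>k<K. psi l k \<in> phi ` {..<CARD('t)}) \<and>
     (\<forall>l<L. \<forall>k<K. \<forall>k'<K. k \<noteq> k' \<longrightarrow> psi l k \<noteq> psi l k')"

definition Dmat ::
  "nat \<Rightarrow> nat \<Rightarrow> real \<Rightarrow> (nat \<Rightarrow> nat \<Rightarrow> nat \<Rightarrow> real)
   \<Rightarrow> (nat \<Rightarrow> nat \<Rightarrow> real) \<Rightarrow> (nat \<Rightarrow> nat \<Rightarrow> complex^'t) \<Rightarrow> nat \<Rightarrow> complex^'t^'t" where
  "Dmat L K sigma2 beta p psi l =
     (\<chi> a b. (if a = b then complex_of_real sigma2 else 0) +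
        (\<Sum>i<L. \<Sum>j<K. complex_of_real (beta l i j * p i j) * (psi i j $ a) * cnj (psi i j $ b)))"

text \<open>MSE_{lk} = M beta_{llk} - M beta_{llk}^2 p_{lk} psi_{lk}^H D_l^{-1} psi_{lk}
  (the quadratic form is real since D_l is Hermitian positive definite; we take its real part).\<close>
definition MSE ::
  "nat \<Rightarrow> nat \<Rightarrow> nat \<Rightarrow> real \<Rightarrow> (nat \<Rightarrow> nat \<Rightarrow> nat \<Rightarrow> real)
   \<Rightarrow> (nat \<Rightarrow> nat \<Rightarrow> real) \<Rightarrow> (nat \<Rightarrow> nat \<Rightarrow> complex^'t) \<Rightarrow> nat \<Rightarrow> nat \<Rightarrow> real" where
  "MSE L K M sigma2 beta p psi l k =
     real M * beta l l k - real M * (beta l l k)^2 * p l k *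
       Re (hip (psi l k) (matrix_inv (Dmat L K sigma2 beta p psi l) *v psi l k))"

definition WSMSE ::
  "nat \<Rightarrow> nat \<Rightarrow> nat \<Rightarrow> real \<Rightarrow> (nat \<Rightarrow> nat \<Rightarrow> nat \<Rightarrow> real) \<Rightarrow> (nat \<Rightarrow> nat \<Rightarrow> real)
   \<Rightarrow> (nat \<Rightarrow> nat \<Rightarrow> real) \<Rightarrow> (nat \<Rightarrow> nat \<Rightarrow> complex^'t) \<Rightarrow> real" where
  "WSMSE L K M sigma2 beta alpha p psi =
     (\<Sum>l<L. \<Sum>k<K. alpha l k * MSE L K M sigma2 beta p psi l k)"

text \<open>f(p,psi,mu) = sum alpha_{lk} (2 beta_{llk} sqrt p_{lk} Re(mu^H psi) - mu^H D_l mu)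
  (mu^H D_l mu is real; real part taken).\<close>
definition fobj ::
  "nat \<Rightarrow> nat \<Rightarrow> real \<Rightarrow> (nat \<Rightarrow> nat \<Rightarrow> nat \<Rightarrow> real) \<Rightarrow> (nat \<Rightarrow> nat \<Rightarrow> real)
   \<Rightarrow> (nat \<Rightarrow> nat \<Rightarrow> real) \<Rightarrow> (nat \<Rightarrow> nat \<Rightarrow> complex^'t) \<Rightarrow> (nat \<Rightarrow> nat \<Rightarrow> complex^'t) \<Rightarrow> real" where
  "fobj L K sigma2 beta alpha p psi mu =
     (\<Sum>l<L. \<Sum>k<K. alpha l k *
        (2 * beta l l k * sqrt (p l k) * Re (hip (mu l k) (psi l k))
         - Re (hip (mu l k) (Dmat L K sigma2 beta p psi l *v mu l k))))"

definition mu_update ::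
  "nat \<Rightarrow> nat \<Rightarrow> real \<Rightarrow> (nat \<Rightarrow> nat \<Rightarrow> nat \<Rightarrow> real)
   \<Rightarrow> (nat \<Rightarrow> nat \<Rightarrow> real) \<Rightarrow> (nat \<Rightarrow> nat \<Rightarrow> complex^'t) \<Rightarrow> nat \<Rightarrow> nat \<Rightarrow> complex^'t" where
  "mu_update L K sigma2 beta p psi l k =
     complex_of_real (beta l l k * sqrt (p l k)) *s
       (matrix_inv (Dmat L K sigma2 beta p psi l) *v psi l k)"

end

theory Submission
  imports Defs
begin
lemma hip_def': "hip x y = (\<Sum>a\<in>UNIV. cnj (x $ a) * y $ a)" by (simp add: hip_def)

lemma Dmat_mv:
  "(Dmat L K s beta p psi l *v x) $ a =
     complex_of_real s * x$a +
     (\<Sum>i<L. \<Sum>j<K. complex_of_real (beta l i j * p i j) * psi i j $ a * hip (psi i j) x)"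
proof -
  have "(Dmat L K s beta p psi l *v x) $ a =
     (\<Sum>b\<in>UNIV. (if a = b then complex_of_real s else 0) * x$b) +
     (\<Sum>b\<in>UNIV. (\<Sum>i<L. \<Sum>j<K. complex_of_real (beta l i j * p i j) * (psi i j $ a) * cnj (psi i j $ b)) * x$b)"
    unfolding matrix_vector_mult_def Dmat_def by (simp only: vec_lambda_beta distrib_right sum.distrib)
  also have "(\<Sum>b\<in>UNIV. (if a = b then complex_of_real s else 0) * x$b) = complex_of_real s * x$a"
    by (simp add: if_distrib[of "\<lambda>c. c * _"] cong: if_cong)
  also have "(\<Sum>b\<in>UNIV. (\<Sum>i<L. \<Sum>j<K. complex_of_real (beta l i j * p i j) * (psi i j $ a) * cnj (psi i j $ b)) * x$b)
     = (\<Sum>b\<in>UNIV. \<Sum>i<L. \<Sum>j<K. complex_of_real (beta l i j * p i j) * (psi i j $ a) * (cnj (psi i j $ b) * x$b))"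
    by (simp only: sum_distrib_right mult.assoc)
  also have "\<dots> = (\<Sum>i<L. \<Sum>b\<in>UNIV. \<Sum>j<K. complex_of_real (beta l i j * p i j) * (psi i j $ a) * (cnj (psi i j $ b) * x$b))"
    by (rule sum.swap)
  also have "\<dots> = (\<Sum>i<L. \<Sum>j<K. \<Sum>b\<in>UNIV. complex_of_real (beta l i j * p i j) * (psi i j $ a) * (cnj (psi i j $ b) * x$b))"
    by (rule sum.cong[OF refl], rule sum.swap)
  also have "\<dots> = (\<Sum>i<L. \<Sum>j<K. complex_of_real (beta l i j * p i j) * psi i j $ a * hip (psi i j) x)"
    by (simp only: hip_def' sum_distrib_left)
  finally show ?thesis .
qed

lemma quad_form:
  "hip x (Dmat L K s beta p psi l *v x) =
     complex_of_real s * (\<Sum>a\<in>UNIV. cnj (x$a) * x$a) +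
     (\<Sum>i<L. \<Sum>j<K. complex_of_real (beta l i j * p i j) * (hip x (psi i j) * hip (psi i j) x))"
proof -
  have "hip x (Dmat L K s beta p psi l *v x) =
     (\<Sum>a\<in>UNIV. complex_of_real s * (cnj (x$a) * x$a) +
     (\<Sum>i<L. \<Sum>j<K. complex_of_real (beta l i j * p i j) * (cnj (x$a) * (psi i j $ a * hip (psi i j) x))))"
    unfolding hip_def'[of x] Dmat_mv
  proof (rule sum.cong[OF refl])
    fix a
    show "cnj (x $ a) * (complex_of_real s * x $ a + (\<Sum>i<L. \<Sum>j<K. complex_of_real (beta l i j * p i j) * psi i j $ a * hip (psi i j) x)) =
      complex_of_real s * (cnj (x $ a) * x $ a) + (\<Sum>i<L. \<Sum>j<K. complex_of_real (beta l i j * p i j) * (cnj (x $ a) * (psi i j $ a * hip (psi i j) x)))"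
      by (simp add: distrib_left sum_distrib_left ac_simps)
  qed
  also have "\<dots> = complex_of_real s * (\<Sum>a\<in>UNIV. cnj (x$a) * x$a) +
     (\<Sum>a\<in>UNIV. \<Sum>i<L. \<Sum>j<K. complex_of_real (beta l i j * p i j) * (cnj (x$a) * (psi i j $ a * hip (psi i j) x)))"
    by (simp only: sum.distrib sum_distrib_left)
  also have "(\<Sum>a\<in>UNIV. \<Sum>i<L. \<Sum>j<K. complex_of_real (beta l i j * p i j) * (cnj (x$a) * (psi i j $ a * hip (psi i j) x)))
     = (\<Sum>i<L. \<Sum>j<K. \<Sum>a\<in>UNIV. complex_of_real (beta l i j * p i j) * (cnj (x$a) * (psi i j $ a * hip (psi i j) x)))"
    by (subst sum.swap, rule sum.cong[OF refl], rule sum.swap)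
  also have "\<dots> = (\<Sum>i<L. \<Sum>j<K. complex_of_real (beta l i j * p i j) * (hip x (psi i j) * hip (psi i j) x))"
    by (simp only: hip_def'[of x] sum_distrib_left sum_distrib_right mult.assoc)
  finally show ?thesis .
qed

lemma hip_diff_left: "hip (x - y) z = hip x z - hip y z"
  by (simp add: hip_def sum_subtractf algebra_simps)
lemma hip_diff_right: "hip x (y - z) = hip x y - hip x z"
  by (simp add: hip_def sum_subtractf algebra_simps)
lemma hip_scale_left: "hip (c *s x) y = cnj c * hip x y"
  by (simp add: hip_def sum_distrib_left algebra_simps)
lemma hip_scale_right: "hip x (c *s y) = c * hip x y"
  by (simp add: hip_def sum_distrib_left algebra_simps)
lemma hip_cnj: "hip y x = cnj (hip x y)"
  by (simp add: hip_def cnj_sum mult.commute)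

lemma hip_herm:
  fixes D :: "complex^'t^'t"
  assumes herm: "\<And>a b. D$b$a = cnj (D$a$b)"
  shows "hip w (D *v mu) = cnj (hip mu (D *v w))"
proof -
  have "hip w (D *v mu) = (\<Sum>a\<in>UNIV. \<Sum>b\<in>UNIV. cnj (w$a) * D$a$b * mu$b)"
    by (simp add: hip_def matrix_vector_mult_def sum_distrib_left mult.assoc)
  also have "\<dots> = (\<Sum>b\<in>UNIV. \<Sum>a\<in>UNIV. cnj (w$a) * D$a$b * mu$b)"
    by (rule sum.swap)
  also have "\<dots> = cnj (hip mu (D *v w))"
  proof -
    have herm': "\<And>a b. cnj (D$b$a) = D$a$b" by (metis herm complex_cnj_cnj)
    show ?thesis
      by (simp add: hip_def matrix_vector_mult_def sum_distrib_left cnj_sum herm' ac_simps)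
  qed
  finally show ?thesis .
qed

lemma term_bound:
  fixes D :: "complex^'t^'t"
  assumes herm: "\<And>a b. D$b$a = cnj (D$a$b)"
    and psd: "\<And>x. Re (hip x (D *v x)) \<ge> 0"
    and Dw: "D *v w = v"
  shows "2 * Re (hip mu v) - Re (hip mu (D *v mu)) \<le> Re (hip w v)"
proof -
  have "0 \<le> Re (hip (mu - w) (D *v (mu - w)))" by (rule psd)
  also have "\<dots> = Re (hip mu (D *v mu)) - Re (hip mu v) - Re (hip w (D *v mu)) + Re (hip w v)"
    by (simp add: matrix_vector_mult_diff_distrib hip_diff_left hip_diff_right Dw)
  also have "Re (hip w (D *v mu)) = Re (hip mu v)"
    using hip_herm[OF herm, of w mu] Dw by simp
  finally show ?thesis by simp
qed


lemma re_cnj_mult: "Re (cnj z * z) = (cmod z)^2"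
  by (subst cmod_power2) (simp add: power2_eq_square)

lemma re_ofreal_mult: "Re (complex_of_real c * z) = c * Re z" by simp

lemma psd:
  assumes s: "s > 0" and c: "\<forall>i<L. \<forall>j<K. 0 \<le> beta l i j * p i j"
  shows "Re (hip x (Dmat L K s beta p psi l *v x)) \<ge> s * (\<Sum>a\<in>UNIV. (cmod (x$a))^2)"
proof -
  have e1: "Re (complex_of_real s * (\<Sum>a\<in>UNIV. cnj (x$a) * x$a)) = s * (\<Sum>a\<in>UNIV. (cmod (x$a))^2)"
    by (simp only: Re_sum re_cnj_mult re_ofreal_mult)
  have e2: "Re (\<Sum>i<L. \<Sum>j<K. complex_of_real (beta l i j * p i j) * (hip x (psi i j) * hip (psi i j) x))
     = (\<Sum>i<L. \<Sum>j<K. (beta l i j * p i j) * (cmod (hip (psi i j) x))^2)"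
    by (simp only: Re_sum hip_cnj[of x] re_cnj_mult re_ofreal_mult)
  have "0 \<le> (\<Sum>i<L. \<Sum>j<K. (beta l i j * p i j) * (cmod (hip (psi i j) x))^2)"
    using c by (intro sum_nonneg) auto
  moreover have "Re (hip x (Dmat L K s beta p psi l *v x)) =
     Re (complex_of_real s * (\<Sum>a\<in>UNIV. cnj (x$a) * x$a)) +
     Re (\<Sum>i<L. \<Sum>j<K. complex_of_real (beta l i j * p i j) * (hip x (psi i j) * hip (psi i j) x))"
    by (simp only: quad_form plus_complex.sel)
  ultimately show ?thesis using e1 e2 by linarith
qed

lemma Dmat_herm: "Dmat L K s beta p psi l $ b $ a = cnj (Dmat L K s beta p psi l $ a $ b)"
  by (simp add: Dmat_def cnj_sum ac_simps eq_commute[of b a])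

lemma Dmat_inv:
  assumes s: "s > 0" and c: "\<forall>i<L. \<forall>j<K. 0 \<le> beta l i j * p i j"
  shows "Dmat L K s beta p psi l *v (matrix_inv (Dmat L K s beta p psi l) *v y) = y"
proof -
  let ?D = "Dmat L K s beta p psi l"
  have "\<forall>x. ?D *v x = 0 \<longrightarrow> x = 0"
  proof (intro allI impI)
    fix x assume "?D *v x = 0"
    then have "s * (\<Sum>a\<in>UNIV. (cmod (x$a))^2) \<le> 0"
      using psd[where x=x and psi=psi and s=s and L=L and K=K and beta=beta and l=l and p=p, OF s c] by (simp add: hip_def)
    then have "(\<Sum>a\<in>UNIV. (cmod (x$a))^2) \<le> 0" using s
      by (simp add: mult_le_0_iff)
    then have "(\<Sum>a\<in>UNIV. (cmod (x$a))^2) = 0"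
      by (meson antisym sum_nonneg zero_le_power2)
    then have "\<forall>a. (cmod (x$a))^2 = 0"
      by (simp add: sum_nonneg_eq_0_iff)
    then show "x = 0" by (simp add: vec_eq_iff)
  qed
  then have "invertible ?D"
    unfolding invertible_left_inverse matrix_left_invertible_ker .
  then have "?D ** matrix_inv ?D = mat 1"
    unfolding invertible_def matrix_inv_def by (rule someI_ex[where P="\<lambda>A'. ?D ** A' = mat 1 \<and> A' ** ?D = mat 1", THEN conjunct1])
  then show ?thesis by (simp add: matrix_vector_mul_assoc)
qed

lemma mv_scale: "(A::complex^'t^'t) *v (c *s x) = c *s (A *v x)"
  by (simp add: vec_eq_iff matrix_vector_mult_def sum_distrib_left algebra_simps)


lemma term_facts:
  fixes psi :: "nat \<Rightarrow> nat \<Rightarrow> complex^'t"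
  assumes s: "s > 0" and c: "\<forall>i<L. \<forall>j<K. 0 \<le> beta l i j * p i j" and pk: "p l k \<ge> 0"
  shows "2 * beta l l k * sqrt (p l k) * Re (hip mu (psi l k))
           - Re (hip mu (Dmat L K s beta p psi l *v mu))
         \<le> (beta l l k)^2 * p l k * Re (hip (psi l k) (matrix_inv (Dmat L K s beta p psi l) *v psi l k))"
    and "2 * beta l l k * sqrt (p l k) * Re (hip (mu_update L K s beta p psi l k) (psi l k))
           - Re (hip (mu_update L K s beta p psi l k) (Dmat L K s beta p psi l *v mu_update L K s beta p psi l k))
         = (beta l l k)^2 * p l k * Re (hip (psi l k) (matrix_inv (Dmat L K s beta p psi l) *v psi l k))"
proof -
  define D where "D = Dmat L K s beta p psi l"
  define w0 where "w0 = matrix_inv D *v psi l k"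
  define b where "b = beta l l k * sqrt (p l k)"
  define v where "v = complex_of_real b *s psi l k"
  define w where "w = complex_of_real b *s w0"
  have Dw: "D *v w = v"
    unfolding w_def v_def w0_def D_def mv_scale by (simp add: Dmat_inv[where s=s and L=L and K=K and beta=beta and l=l and p=p, OF s c])
  have hmv: "\<And>mu. Re (hip mu v) = b * Re (hip mu (psi l k))"
    unfolding v_def hip_scale_right re_ofreal_mult ..
  have sq: "sqrt (p l k) * sqrt (p l k) = p l k" using pk by simp
  have "b * b = (beta l l k * beta l l k) * (sqrt (p l k) * sqrt (p l k))"
    unfolding b_def by (simp only: mult_ac)
  then have bb: "b * b = (beta l l k)^2 * p l k"
    by (simp only: sq power2_eq_square)
  have "hip w v = complex_of_real b * (cnj (complex_of_real b) * hip w0 (psi l k))"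
    unfolding w_def v_def by (simp only: hip_scale_left hip_scale_right mult.left_commute[of "cnj _"])
  also have "\<dots> = complex_of_real (b * b) * cnj (hip (psi l k) w0)"
    by (simp only: complex_cnj_complex_of_real of_real_mult mult.assoc hip_cnj[of w0 "psi l k"])
  finally have "hip w v = complex_of_real (b * b) * cnj (hip (psi l k) w0)" .
  then have hwv: "Re (hip w v) = (beta l l k)^2 * p l k * Re (hip (psi l k) w0)"
    by (simp only: re_ofreal_mult bb cnj.sel)
  have tb: "\<And>mu. 2 * Re (hip mu v) - Re (hip mu (D *v mu)) \<le> Re (hip w v)"
  proof (rule term_bound[OF _ _ Dw])
    show "\<And>a b. D $ b $ a = cnj (D $ a $ b)" unfolding D_def by (rule Dmat_herm)
    fix x :: "complex^'t"
    have "0 \<le> s * (\<Sum>a\<in>UNIV. (cmod (x$a))^2)"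
      using s by (simp add: sum_nonneg)
    also have "\<dots> \<le> Re (hip x (D *v x))"
      unfolding D_def by (rule psd[where s=s and L=L and K=K and beta=beta and l=l and p=p, OF s c])
    finally show "0 \<le> Re (hip x (D *v x))" .
  qed
  show "2 * beta l l k * sqrt (p l k) * Re (hip mu (psi l k))
           - Re (hip mu (Dmat L K s beta p psi l *v mu))
         \<le> (beta l l k)^2 * p l k * Re (hip (psi l k) (matrix_inv (Dmat L K s beta p psi l) *v psi l k))"
  proof -
    have e: "2 * beta l l k * sqrt (p l k) * Re (hip mu (psi l k)) = 2 * (b * Re (hip mu (psi l k)))"
      unfolding b_def by (simp only: mult_ac)
    show ?thesis unfolding D_def[symmetric] w0_def[symmetric] e
      using tb[of mu] hmv[of mu] hwv by linarith
  qed
  have mu_eq: "mu_update L K s beta p psi l k = w"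
    unfolding mu_update_def w_def w0_def b_def D_def ..
  show "2 * beta l l k * sqrt (p l k) * Re (hip (mu_update L K s beta p psi l k) (psi l k))
           - Re (hip (mu_update L K s beta p psi l k) (Dmat L K s beta p psi l *v mu_update L K s beta p psi l k))
         = (beta l l k)^2 * p l k * Re (hip (psi l k) (matrix_inv (Dmat L K s beta p psi l) *v psi l k))"
  proof -
    have e: "2 * beta l l k * sqrt (p l k) * Re (hip w (psi l k)) = 2 * (b * Re (hip w (psi l k)))"
      unfolding b_def by (simp only: mult_ac)
    show ?thesis unfolding mu_eq D_def[symmetric] w0_def[symmetric] Dw e
      using hmv[of w] hwv by linarith
  qed
qed

definition Gval where
  "Gval L K s beta alpha p psi = (\<Sum>l<L. \<Sum>k<K. alpha l k *
      ((beta l l k)^2 * p l k * Re (hip (psi l k) (matrix_inv (Dmat L K s beta p psi l) *v psi l k))))"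

lemma fobj_le:
  assumes s: "s > 0" and bp: "\<And>l i j. l < L \<Longrightarrow> i < L \<Longrightarrow> j < K \<Longrightarrow> beta l i j > 0"
    and ap: "\<And>l k. l < L \<Longrightarrow> k < K \<Longrightarrow> alpha l k > 0"
    and f: "feasible L K Pmax phi p psi"
  shows "fobj L K s beta alpha p psi mu \<le> Gval L K s beta alpha p psi"
    and "fobj L K s beta alpha p psi (mu_update L K s beta p psi) = Gval L K s beta alpha p psi"
proof -
  have p0: "\<And>i j. i < L \<Longrightarrow> j < K \<Longrightarrow> 0 \<le> p i j" using f unfolding feasible_def by auto
  have c: "\<And>l. l < L \<Longrightarrow> \<forall>i<L. \<forall>j<K. 0 \<le> beta l i j * p i j"
    using p0 bp by (meson less_imp_le mult_nonneg_nonneg)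
  show "fobj L K s beta alpha p psi mu \<le> Gval L K s beta alpha p psi"
    unfolding fobj_def Gval_def
  proof (intro sum_mono)
    fix l k assume "l \<in> {..<L}" "k \<in> {..<K}"
    then have l: "l < L" and k: "k < K" by auto
    have a: "0 \<le> alpha l k" using ap[OF l k] by simp
    show "alpha l k * (2 * beta l l k * sqrt (p l k) * Re (hip (mu l k) (psi l k))
           - Re (hip (mu l k) (Dmat L K s beta p psi l *v mu l k)))
         \<le> alpha l k * ((beta l l k)^2 * p l k * Re (hip (psi l k) (matrix_inv (Dmat L K s beta p psi l) *v psi l k)))"
      by (rule mult_left_mono[OF term_facts(1)[where s=s and L=L and K=K and beta=beta and l=l and p=p and k=k and psi=psi and mu="mu l k", OF s c[OF l] p0[OF l k]] a])
  qed
  show "fobj L K s beta alpha p psi (mu_update L K s beta p psi) = Gval L K s beta alpha p psi"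
    unfolding fobj_def Gval_def
  proof (intro sum.cong refl)
    fix l k assume "l \<in> {..<L}" "k \<in> {..<K}"
    then have l: "l < L" and k: "k < K" by auto
    show "alpha l k * (2 * beta l l k * sqrt (p l k) * Re (hip (mu_update L K s beta p psi l k) (psi l k))
           - Re (hip (mu_update L K s beta p psi l k) (Dmat L K s beta p psi l *v mu_update L K s beta p psi l k)))
         = alpha l k * ((beta l l k)^2 * p l k * Re (hip (psi l k) (matrix_inv (Dmat L K s beta p psi l) *v psi l k)))"
      by (simp only: term_facts(2)[where s=s and L=L and K=K and beta=beta and l=l and p=p and k=k and psi=psi, OF s c[OF l] p0[OF l k]])
  qed
qed

lemma WSMSE_eq:
  "WSMSE L K M s beta alpha p psi =
     real M * (\<Sum>l<L. \<Sum>k<K. alpha l k * beta l l k) - real M * Gval L K s beta alpha p psi"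
proof -
  have "\<And>l k. alpha l k * MSE L K M s beta p psi l k = real M * (alpha l k * beta l l k) - real M *
     (alpha l k * ((beta l l k)^2 * p l k * Re (hip (psi l k) (matrix_inv (Dmat L K s beta p psi l) *v psi l k))))"
    unfolding MSE_def by (simp only: right_diff_distrib mult_ac)
  then show ?thesis
    unfolding WSMSE_def Gval_def by (simp only: sum_subtractf sum_distrib_left)
qed

theorem proposition4:
  fixes L K M :: nat and sigma2 Pmax :: real
    and beta :: "nat \<Rightarrow> nat \<Rightarrow> nat \<Rightarrow> real" and alpha :: "nat \<Rightarrow> nat \<Rightarrow> real"
    and phi :: "nat \<Rightarrow> complex^'t"
    and pt :: "nat \<Rightarrow> nat \<Rightarrow> nat \<Rightarrow> real" and psit :: "nat \<Rightarrow> nat \<Rightarrow> nat \<Rightarrow> complex^'t"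
  assumes KT: "K \<le> CARD('t)"
    and M: "M \<ge> 1"
    and sigma: "sigma2 > 0"
    and Pmax: "Pmax > 0"
    and beta_pos: "\<And>l i j. l < L \<Longrightarrow> i < L \<Longrightarrow> j < K \<Longrightarrow> beta l i j > 0"
    and alpha_pos: "\<And>l k. l < L \<Longrightarrow> k < K \<Longrightarrow> alpha l k > 0"
    and phi_orth: "\<And>s s'. s < CARD('t) \<Longrightarrow> s' < CARD('t) \<Longrightarrow>
                     hip (phi s) (phi s') = (if s = s' then of_nat CARD('t) else 0)"
    and init: "feasible L K Pmax phi (pt 0) (psit 0)"
    and step_feas: "\<And>t. feasible L K Pmax phi (pt (Suc t)) (psit (Suc t))"
    and step_max: "\<And>t p psi. feasible L K Pmax phi p psi \<Longrightarrow>
          fobj L K sigma2 beta alpha p psi (mu_update L K sigma2 beta (pt t) (psit t))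
          \<le> fobj L K sigma2 beta alpha (pt (Suc t)) (psit (Suc t))
               (mu_update L K sigma2 beta (pt t) (psit t))"
  shows "\<forall>t. WSMSE L K M sigma2 beta alpha (pt (Suc t)) (psit (Suc t))
             \<le> WSMSE L K M sigma2 beta alpha (pt t) (psit t)"
proof
  fix t
  have ft: "feasible L K Pmax phi (pt t) (psit t)"
    using init step_feas by (cases t) auto
  let ?mu = "mu_update L K sigma2 beta (pt t) (psit t)"
  have "Gval L K sigma2 beta alpha (pt t) (psit t) = fobj L K sigma2 beta alpha (pt t) (psit t) ?mu"
    using fobj_le(2)[OF sigma beta_pos alpha_pos ft] by simp
  also have "\<dots> \<le> fobj L K sigma2 beta alpha (pt (Suc t)) (psit (Suc t)) ?mu"
    by (rule step_max[OF ft])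
  also have "\<dots> \<le> Gval L K sigma2 beta alpha (pt (Suc t)) (psit (Suc t))"
    by (rule fobj_le(1)[OF sigma beta_pos alpha_pos step_feas])
  finally have G: "Gval L K sigma2 beta alpha (pt t) (psit t) \<le> Gval L K sigma2 beta alpha (pt (Suc t)) (psit (Suc t))" .
  have "real M * Gval L K sigma2 beta alpha (pt t) (psit t) \<le> real M * Gval L K sigma2 beta alpha (pt (Suc t)) (psit (Suc t))"
    by (rule mult_left_mono[OF G]) simp
  then show "WSMSE L K M sigma2 beta alpha (pt (Suc t)) (psit (Suc t))
             \<le> WSMSE L K M sigma2 beta alpha (pt t) (psit t)"
    unfolding WSMSE_eq by linarith
qed

end
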